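(* Let $\mathcal{F}$ be a linear $k$-uniform family with $k\geq 2$ and let $\mathcal{M}$ be a maximum matching of $\mathcal{F}$. If $B=\{x_1,x_2,\ldots,x_k\}\in\mathcal{M}$ is such that $d_1(x_i,\mathcal{M})\geq k$ for some $1\leq i\leq k$, then $d_1(x_j,\mathcal{M})=0$ for all $1\leq j\leq k$ with $j\neq i$.
   Context: A family is a finite collection of distinct subsets of a vertex set; it is $k$-uniform if every member has exactly $k$ elements and linear if any two distinct members share at most one vertex. A matching is a collection of pairwise disjoint members; it is maximum if it has the largest possible size. $X_{\mathcal{M}}=\bigcup_{A\in\mathcal{M}}A$. For $i\in\{1,\ldots,k\}$, $D_i(\mathcal{F},\mathcal{M})=\{A\in\mathcal{F}: |A\cap X_{\mathcal{M}}|=i\}$, and for a vertex $x$, $d_i(x,\mathcal{M})=|\{A\in D_i(\mathcal{F},\mathcal{M}): x\in A\}|$. *)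

theory Defs
  imports Main
begin

definition uniform_family :: "nat \<Rightarrow> 'a set set \<Rightarrow> bool" where
  "uniform_family k F \<longleftrightarrow> finite F \<and> (\<forall>A\<in>F. finite A \<and> card A = k)"

definition linear_family :: "'a set set \<Rightarrow> bool" where
  "linear_family F \<longleftrightarrow> (\<forall>A\<in>F. \<forall>B\<in>F. A \<noteq> B \<longrightarrow> card (A \<inter> B) \<le> 1)"

definition is_matching :: "'a set set \<Rightarrow> 'a set set \<Rightarrow> bool" where
  "is_matching F M \<longleftrightarrow> M \<subseteq> F \<and> (\<forall>A\<in>M. \<forall>B\<in>M. A \<noteq> B \<longrightarrow> A \<inter> B = {})"

definition is_max_matching :: "'a set set \<Rightarrow> 'a set set \<Rightarrow> bool" where
  "is_max_matching F M \<longleftrightarrow> is_matching F M \<and>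
     (\<forall>M'. is_matching F M' \<longrightarrow> card M' \<le> card M)"

definition XM :: "'a set set \<Rightarrow> 'a set" where
  "XM M = \<Union>M"

definition D_i :: "nat \<Rightarrow> 'a set set \<Rightarrow> 'a set set \<Rightarrow> 'a set set" where
  "D_i i F M = {A\<in>F. card (A \<inter> XM M) = i}"

definition d_i :: "nat \<Rightarrow> 'a set set \<Rightarrow> 'a \<Rightarrow> 'a set set \<Rightarrow> nat" where
  "d_i i F x M = card {A\<in>D_i i F M. x \<in> A}"

end

theory Submission
  imports Defs
begin

lemma card1_mem: "card S = 1 \<Longrightarrow> x \<in> S \<Longrightarrow> S = {x}"
  by (metis card_1_singletonE singletonD)

theorem lemma2:
  fixes F M :: "'a set set" and k :: nat and B :: "'a set" and x :: 'a
  assumes "k \<ge> 2"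
    and "uniform_family k F"
    and "linear_family F"
    and "is_max_matching F M"
    and "B \<in> M"
    and "x \<in> B"
    and "d_i 1 F x M \<ge> k"
  shows "\<forall>y\<in>B. y \<noteq> x \<longrightarrow> d_i 1 F y M = 0"
proof (intro ballI impI, rule ccontr)
  fix y assume yB: "y \<in> B" and yx: "y \<noteq> x" and ne: "d_i 1 F y M \<noteq> 0"
  have finF: "finite F" and unif: "\<And>A. A \<in> F \<Longrightarrow> finite A \<and> card A = k"
    using assms(2) unfolding uniform_family_def by auto
  have matM: "M \<subseteq> F" "\<And>A C. A \<in> M \<Longrightarrow> C \<in> M \<Longrightarrow> A \<noteq> C \<Longrightarrow> A \<inter> C = {}"
    using assms(4) unfolding is_max_matching_def is_matching_def by auto
  have maxM: "\<And>M'. is_matching F M' \<Longrightarrow> card M' \<le> card M"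
    using assms(4) unfolding is_max_matching_def by auto
  have finM: "finite M" using matM(1) finF finite_subset by blast
  have xX: "x \<in> XM M" and yX: "y \<in> XM M" using assms(5,6) yB unfolding XM_def by auto
  define S where "S = {A\<in>D_i 1 F M. x \<in> A}"
  define T where "T = {A\<in>D_i 1 F M. y \<in> A}"
  have finT: "finite T" unfolding T_def D_i_def using finF by auto
  have "T \<noteq> {}" using ne unfolding d_i_def T_def[symmetric] by auto
  then obtain A' where A'T: "A' \<in> T" by auto
  have A'F: "A' \<in> F" and A'X: "A' \<inter> XM M = {y}"
    using A'T yX card1_mem[of "A' \<inter> XM M" y] unfolding T_def D_i_def by auto
  have SF: "\<And>A. A \<in> S \<Longrightarrow> A \<in> F \<and> A \<inter> XM M = {x}"
    using xX card1_mem[of _ x] unfolding S_def D_i_def by auto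
  have cS: "card S \<ge> k" using assms(7) unfolding d_i_def S_def by simp
  have finA': "finite A'" and cA': "card A' = k" using unif A'F by auto
  have cA'': "card (A' - XM M) = k - 1"
    using card_Diff_subset_Int[of A' "XM M"] finA' cA' A'X by simp
  obtain A where AS: "A \<in> S" and disj: "A \<inter> A' = {}"
  proof (rule ccontr)
    assume "\<not> thesis"
    with that have meet: "\<And>A. A \<in> S \<Longrightarrow> A \<inter> A' \<noteq> {}" by blast
    define f where "f A = (SOME v. v \<in> A \<inter> A')" for A
    have fv: "f A \<in> A \<inter> A'" if AS0: "A \<in> S" for A
      proof -
      obtain v where "v \<in> A \<inter> A'" using meet[OF AS0] by blast
      thus ?thesis unfolding f_def by (rule someI)
    qed
    have fout: "f A \<in> A' - XM M" if "A \<in> S" for A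
    proof -
      have "f A \<in> A \<inter> A'" using fv that by blast
      moreover have "f A \<notin> XM M"
      proof
        assume "f A \<in> XM M"
        then have "f A = x" "f A = y" using SF[OF that] A'X \<open>f A \<in> A \<inter> A'\<close> by auto
        thus False using yx by simp
      qed
      ultimately show ?thesis by auto
    qed
    have "inj_on f S"
    proof (rule inj_onI)
      fix A1 A2 assume a: "A1 \<in> S" "A2 \<in> S" "f A1 = f A2"
      have "{x, f A1} \<subseteq> A1 \<inter> A2" using fv[OF a(1)] fv[OF a(2)] a(3) SF[OF a(1)] SF[OF a(2)] by auto
      moreover have "x \<noteq> f A1" using fout[OF a(1)] xX by auto
      moreover have "finite (A1 \<inter> A2)" using unif SF[OF a(1)] by auto
      ultimately have "card (A1 \<inter> A2) \<ge> 2"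
        using card_mono[of "A1 \<inter> A2" "{x, f A1}"] by simp
      have F12: "A1 \<in> F" "A2 \<in> F" using SF[OF a(1)] SF[OF a(2)] by auto
      show "A1 = A2"
      proof (rule ccontr)
        assume "A1 \<noteq> A2"
        hence "card (A1 \<inter> A2) \<le> 1" using assms(3) F12 unfolding linear_family_def by blast
        thus False using \<open>card (A1 \<inter> A2) \<ge> 2\<close> by simp
      qed
    qed
    hence "card S \<le> card (A' - XM M)"
      using fout finA' by (intro card_inj_on_le) auto
    thus False using cS cA'' assms(1) by simp
  qed
  have AF: "A \<in> F" and AX: "A \<inter> XM M = {x}" using SF[OF AS] by auto
  have cA: "card A = k" "finite A" using unif AF by auto
  have notM: "C \<notin> M" if "C \<in> F" "card (C \<inter> XM M) = 1" for C
  proof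
    assume "C \<in> M"
    hence "C \<subseteq> XM M" unfolding XM_def by auto
    hence "C \<inter> XM M = C" by auto
    thus False using that unif assms(1) by force
  qed
  have AnM: "A \<notin> M" using notM[OF AF] AX by simp
  have A'nM: "A' \<notin> M" using notM[OF A'F] A'X by simp
  have AA': "A \<noteq> A'" using AX A'X yx by auto
  have disjC: "C \<inter> D = {}" if "C \<in> M" "C \<noteq> B" "D \<inter> XM M \<subseteq> B" for C D
  proof -
    have "C \<subseteq> XM M" using that(1) unfolding XM_def by auto
    hence "C \<inter> D \<subseteq> C \<inter> B" using that(3) by auto
    thus ?thesis using matM(2)[OF that(1) assms(5)] that(2) by auto
  qed
  define M' where "M' = insert A (insert A' (M - {B}))"
  have "is_matching F M'"
    unfolding is_matching_def M'_def
  proof (intro conjI ballI impI)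
    show "insert A (insert A' (M - {B})) \<subseteq> F" using AF A'F matM(1) by auto
  next
    fix C D assume C: "C \<in> insert A (insert A' (M - {B}))" and D: "D \<in> insert A (insert A' (M - {B}))"
      and CD: "C \<noteq> D"
    have AB: "A \<inter> XM M \<subseteq> B" "A' \<inter> XM M \<subseteq> B" using AX A'X assms(6) yB by auto
    have dA: "E \<inter> A = {}" "A \<inter> E = {}" if "E \<in> M - {B}" for E
      using disjC[OF _ _ AB(1), of E] that by auto
    have dA': "E \<inter> A' = {}" "A' \<inter> E = {}" if "E \<in> M - {B}" for E
      using disjC[OF _ _ AB(2), of E] that by auto
    have dAA: "A' \<inter> A = {}" using disj by blast
    show "C \<inter> D = {}"
      using C D CD
    proof (elim insertE)
      assume "C \<in> M - {B}" "D \<in> M - {B}" "C \<noteq> D"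
      thus ?thesis using matM(2)[of C D] by blast
    qed (simp_all add: disj dAA dA dA')
  qed
  hence "card M' \<le> card M" by (rule maxM)
  moreover have "card M' = card M + 1"
  proof -
    have "card (M - {B}) = card M - 1" using assms(5) finM by (simp add: card_Diff_singleton)
    moreover have "card M \<ge> 1" using assms(5) finM card_0_eq by (metis One_nat_def Suc_leI empty_iff not_gr0)
    moreover have "card (insert A (insert A' (M - {B}))) = card (M - {B}) + 2"
      using finM AnM A'nM AA' by simp
    ultimately show ?thesis unfolding M'_def by simp
  qed
  ultimately show False by simp
qed

end
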